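(* Let $N$ be a weakly connected forward-backward conflict free Petri net without self-loops having at least one proper source place or at least one proper sink place. If the only-sink marking $M_d$ is reachable from the only-source marking $M_0$, then $N$ is acyclic.
   Context: A Petri net $N=(P,T,{}^\bullet(-),(-)^\bullet)$ consists of disjoint finite sets $P$ (places) and $T$ (transitions) and functions ${}^\bullet(-),(-)^\bullet\colon T\to\mathcal P(P)$ giving inputs and outputs of each transition; arcs $p\to t$ iff $p\in{}^\bullet t$, $t\to p$ iff $p\in t^\bullet$. For a place $p$, ${}^\bullet p=\{t:p\in t^\bullet\}$, $p^\bullet=\{t:p\in{}^\bullet t\}$. No self-loops: no place is both input and output of the same transition. FBCF: $|{}^\bullet p|\le1$ and $|p^\bullet|\le1$ for all places. A source is a place with ${}^\bullet p=\emptyset$, a sink one with $p^\bullet=\emptyset$; a proper source is a source with $p^\bullet\ne\emptyset$, a proper sink a sink with ${}^\bullet p\neq\emptyset$. $N$ is weakly connected if its underlying undirected graph is connected, and acyclic if it has no directed cycle. A marking is $M\colon P\to\mathbb N$; $t$ is enabled if $M(p)\ge1$ for all $p\in{}^\bullet t$, and firing it subtracts one token from each $p\in{}^\bullet t$ and adds one to each $p\in t^\bullet$. $M$ is reachable from $M_0$ if obtained by a finite sequence of firings of enabled transitions. $M_0(p)=1$ if $p$ is a source, $0$ otherwise; $M_d(p)=1$ if $p$ is a sink, $0$ otherwise. *)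

theory Defs
  imports Main
begin

definition petri_net :: "'p set \<Rightarrow> 't set \<Rightarrow> ('t \<Rightarrow> 'p set) \<Rightarrow> ('t \<Rightarrow> 'p set) \<Rightarrow> bool" where
  "petri_net P T pre post \<longleftrightarrow> finite P \<and> finite T \<and> (\<forall>t\<in>T. pre t \<subseteq> P \<and> post t \<subseteq> P)"

definition pre_place :: "'t set \<Rightarrow> ('t \<Rightarrow> 'p set) \<Rightarrow> 'p \<Rightarrow> 't set" where
  "pre_place T post p = {t\<in>T. p \<in> post t}"

definition post_place :: "'t set \<Rightarrow> ('t \<Rightarrow> 'p set) \<Rightarrow> 'p \<Rightarrow> 't set" where
  "post_place T pre p = {t\<in>T. p \<in> pre t}"

definition no_self_loops :: "'t set \<Rightarrow> ('t \<Rightarrow> 'p set) \<Rightarrow> ('t \<Rightarrow> 'p set) \<Rightarrow> bool" where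
  "no_self_loops T pre post \<longleftrightarrow> (\<forall>t\<in>T. pre t \<inter> post t = {})"

definition FBCF :: "'p set \<Rightarrow> 't set \<Rightarrow> ('t \<Rightarrow> 'p set) \<Rightarrow> ('t \<Rightarrow> 'p set) \<Rightarrow> bool" where
  "FBCF P T pre post \<longleftrightarrow>
     (\<forall>p\<in>P. card (pre_place T post p) \<le> 1 \<and> card (post_place T pre p) \<le> 1)"

definition proper_source :: "'p set \<Rightarrow> 't set \<Rightarrow> ('t \<Rightarrow> 'p set) \<Rightarrow> ('t \<Rightarrow> 'p set) \<Rightarrow> 'p \<Rightarrow> bool" where
  "proper_source P T pre post p \<longleftrightarrow>
     p \<in> P \<and> pre_place T post p = {} \<and> post_place T pre p \<noteq> {}"

definition proper_sink :: "'p set \<Rightarrow> 't set \<Rightarrow> ('t \<Rightarrow> 'p set) \<Rightarrow> ('t \<Rightarrow> 'p set) \<Rightarrow> 'p \<Rightarrow> bool" where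
  "proper_sink P T pre post p \<longleftrightarrow>
     p \<in> P \<and> post_place T pre p = {} \<and> pre_place T post p \<noteq> {}"

definition arcs :: "'t set \<Rightarrow> ('t \<Rightarrow> 'p set) \<Rightarrow> ('t \<Rightarrow> 'p set) \<Rightarrow> ('p + 't) rel" where
  "arcs T pre post =
     {(Inl p, Inr t) | p t. t \<in> T \<and> p \<in> pre t} \<union> {(Inr t, Inl p) | p t. t \<in> T \<and> p \<in> post t}"

definition nodes :: "'p set \<Rightarrow> 't set \<Rightarrow> ('p + 't) set" where
  "nodes P T = Inl ` P \<union> Inr ` T"

definition weakly_connected :: "'p set \<Rightarrow> 't set \<Rightarrow> ('t \<Rightarrow> 'p set) \<Rightarrow> ('t \<Rightarrow> 'p set) \<Rightarrow> bool" where
  "weakly_connected P T pre post \<longleftrightarrow>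
     (\<forall>x\<in>nodes P T. \<forall>y\<in>nodes P T. (x, y) \<in> (arcs T pre post \<union> (arcs T pre post)\<inverse>)\<^sup>*)"

definition net_acyclic :: "'t set \<Rightarrow> ('t \<Rightarrow> 'p set) \<Rightarrow> ('t \<Rightarrow> 'p set) \<Rightarrow> bool" where
  "net_acyclic T pre post \<longleftrightarrow> acyclic (arcs T pre post)"

type_synonym 'p marking = "'p \<Rightarrow> nat"

definition enabled :: "('t \<Rightarrow> 'p set) \<Rightarrow> 'p marking \<Rightarrow> 't \<Rightarrow> bool" where
  "enabled pre M t \<longleftrightarrow> (\<forall>p\<in>pre t. M p \<ge> 1)"

definition fire :: "('t \<Rightarrow> 'p set) \<Rightarrow> ('t \<Rightarrow> 'p set) \<Rightarrow> 'p marking \<Rightarrow> 't \<Rightarrow> 'p marking" where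
  "fire pre post M t = (\<lambda>p. M p - (if p \<in> pre t then 1 else 0) + (if p \<in> post t then 1 else 0))"

definition step :: "'t set \<Rightarrow> ('t \<Rightarrow> 'p set) \<Rightarrow> ('t \<Rightarrow> 'p set) \<Rightarrow> 'p marking \<Rightarrow> 'p marking \<Rightarrow> bool" where
  "step T pre post M M' \<longleftrightarrow> (\<exists>t\<in>T. enabled pre M t \<and> M' = fire pre post M t)"

definition reachable :: "'t set \<Rightarrow> ('t \<Rightarrow> 'p set) \<Rightarrow> ('t \<Rightarrow> 'p set) \<Rightarrow> 'p marking \<Rightarrow> 'p marking \<Rightarrow> bool" where
  "reachable T pre post M0 M \<longleftrightarrow> (step T pre post)\<^sup>*\<^sup>* M0 M"

definition only_source_marking :: "'p set \<Rightarrow> 't set \<Rightarrow> ('t \<Rightarrow> 'p set) \<Rightarrow> 'p marking" where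
  "only_source_marking P T post = (\<lambda>p. if p \<in> P \<and> pre_place T post p = {} then 1 else 0)"

definition only_sink_marking :: "'p set \<Rightarrow> 't set \<Rightarrow> ('t \<Rightarrow> 'p set) \<Rightarrow> 'p marking" where
  "only_sink_marking P T pre = (\<lambda>p. if p \<in> P \<and> post_place T pre p = {} then 1 else 0)"

end

theory Submission
  imports Defs
begin

definition cnt :: "('t \<Rightarrow> 'p set) \<Rightarrow> 'p \<Rightarrow> 't list \<Rightarrow> int" where
  "cnt F p xs = int (length (filter (\<lambda>t. p \<in> F t) xs))"

lemma cnt_append: "cnt F p (xs @ [t]) = cnt F p xs + (if p \<in> F t then 1 else 0)"
  by (simp add: cnt_def)

lemma run_lemma:
  assumes "(step T pre post)\<^sup>*\<^sup>* M0 M"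
  shows "\<exists>ts. set ts \<subseteq> T \<and> (\<forall>p. int (M p) = int (M0 p) + cnt post p ts - cnt pre p ts)
     \<and> (\<forall>i<length ts. \<forall>p\<in>pre (ts!i). int (M0 p) + cnt post p (take i ts) - cnt pre p (take i ts) \<ge> 1)"
  using assms
proof (induction rule: rtranclp_induct)
  case base
  show ?case by (rule exI[of _ "[]"]) (simp add: cnt_def)
next
  case (step M M')
  then obtain ts where ts: "set ts \<subseteq> T" "\<forall>p. int (M p) = int (M0 p) + cnt post p ts - cnt pre p ts"
     "\<forall>i<length ts. \<forall>p\<in>pre (ts!i). int (M0 p) + cnt post p (take i ts) - cnt pre p (take i ts) \<ge> 1"
    by blast
  from step.hyps(2) obtain t where t: "t \<in> T" "enabled pre M t" "M' = fire pre post M t"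
    unfolding step_def by blast
  show ?case
  proof (rule exI[of _ "ts @ [t]"], intro conjI allI impI ballI)
    show "set (ts @ [t]) \<subseteq> T" using ts t by auto
  next
    fix p
    show "int (M' p) = int (M0 p) + cnt post p (ts @ [t]) - cnt pre p (ts @ [t])"
    proof -
      have e: "p \<in> pre t \<Longrightarrow> M p \<ge> 1" using t(2) unfolding enabled_def by blast
      show ?thesis
      proof -
        have h: "int (M p) = int (M0 p) + cnt post p ts - cnt pre p ts" using ts(2) by blast
        have "M' p = M p - (if p \<in> pre t then 1 else 0) + (if p \<in> post t then 1 else 0)"
          unfolding t(3) fire_def by simp
        then show ?thesis unfolding cnt_append using h e
          by (cases "p \<in> pre t"; cases "p \<in> post t") (simp_all add: of_nat_diff)
      qed
    qed
  next
    fix i p assume i: "i < length (ts @ [t])" and p: "p \<in> pre ((ts @ [t]) ! i)"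
    show "int (M0 p) + cnt post p (take i (ts @ [t])) - cnt pre p (take i (ts @ [t])) \<ge> 1"
    proof (cases "i < length ts")
      case True
      have "take i (ts @ [t]) = take i ts" "(ts @ [t]) ! i = ts ! i" using True by (simp_all add: nth_append)
      then show ?thesis using ts(3)[rule_format, OF True] p by simp
    next
      case False
      then have "i = length ts" using i by simp
      then have "take i (ts @ [t]) = ts" "(ts @ [t]) ! i = t" by simp_all
      moreover have "M p \<ge> 1" using p t(2) \<open>(ts @ [t]) ! i = t\<close> unfolding enabled_def by simp
      ultimately show ?thesis using ts(2)[rule_format, of p] by simp
    qed
  qed
qed

lemma cnt_single:
  assumes "set ts \<subseteq> T" "{t\<in>T. p \<in> F t} = {ta}"
  shows "cnt F p ts = int (length (filter (\<lambda>t. t = ta) ts))"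
proof -
  have "filter (\<lambda>t. p \<in> F t) ts = filter (\<lambda>t. t = ta) ts"
    using assms by (intro filter_cong) blast+
  then show ?thesis by (simp add: cnt_def)
qed

lemma cnt_empty:
  assumes "set ts \<subseteq> T" "{t\<in>T. p \<in> F t} = {}"
  shows "cnt F p ts = 0"
proof -
  have "filter (\<lambda>t. p \<in> F t) ts = []"
    using assms by (auto simp: filter_empty_conv)
  then show ?thesis by (simp add: cnt_def)
qed

lemma occ_pos: "(length (filter (\<lambda>t. t = ta) ts) > 0) = (ta \<in> set ts)"
  by (simp add: filter_empty_conv length_greater_0_conv)

theorem mainTheorem6:
  fixes P :: "'p set" and T :: "'t set" and pre post :: "'t \<Rightarrow> 'p set"
  assumes "petri_net P T pre post"
    and "weakly_connected P T pre post"
    and "FBCF P T pre post"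
    and "no_self_loops T pre post"
    and "(\<exists>p. proper_source P T pre post p) \<or> (\<exists>p. proper_sink P T pre post p)"
    and "reachable T pre post (only_source_marking P T post) (only_sink_marking P T pre)"
  shows "net_acyclic T pre post"
proof -
  define M0 where "M0 = only_source_marking P T post"
  define Md where "Md = only_sink_marking P T pre"
  have finT: "finite T" and sub: "\<And>t. t \<in> T \<Longrightarrow> pre t \<subseteq> P \<and> post t \<subseteq> P"
    using assms(1) unfolding petri_net_def by auto
  obtain ts where ts: "set ts \<subseteq> T" "\<forall>p. int (Md p) = int (M0 p) + cnt post p ts - cnt pre p ts"
     "\<forall>i<length ts. \<forall>p\<in>pre (ts!i). int (M0 p) + cnt post p (take i ts) - cnt pre p (take i ts) \<ge> 1"
    using run_lemma[OF assms(6)[unfolded reachable_def]] unfolding M0_def Md_def by blast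
  have uA: "t = t'" if "p \<in> P" "t \<in> T" "t' \<in> T" "p \<in> post t" "p \<in> post t'" for p t t'
  proof -
    have "card {t\<in>T. p \<in> post t} \<le> Suc 0" using assms(3) that(1)
      unfolding FBCF_def pre_place_def by auto
    moreover have "finite {t\<in>T. p \<in> post t}" using finT by simp
    ultimately have "\<forall>a\<in>{t\<in>T. p \<in> post t}. \<forall>b\<in>{t\<in>T. p \<in> post t}. a = b"
      using card_le_Suc0_iff_eq by blast
    then show ?thesis using that by blast
  qed
  have uB: "t = t'" if "p \<in> P" "t \<in> T" "t' \<in> T" "p \<in> pre t" "p \<in> pre t'" for p t t'
  proof -
    have "card {t\<in>T. p \<in> pre t} \<le> Suc 0" using assms(3) that(1)
      unfolding FBCF_def post_place_def by auto
    moreover have "finite {t\<in>T. p \<in> pre t}" using finT by simp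
    ultimately have "\<forall>a\<in>{t\<in>T. p \<in> pre t}. \<forall>b\<in>{t\<in>T. p \<in> pre t}. a = b"
      using card_le_Suc0_iff_eq by blast
    then show ?thesis using that by blast
  qed
  have Aeq: "{t\<in>T. p \<in> post t} = {ta}" if "p \<in> P" "ta \<in> T" "p \<in> post ta" for p ta
    using uA[OF that(1) _ that(2) _ that(3)] that by blast
  have Beq: "{t\<in>T. p \<in> pre t} = {tb}" if "p \<in> P" "tb \<in> T" "p \<in> pre tb" for p tb
    using uB[OF that(1) _ that(2) _ that(3)] that by blast
  have key: "ta \<in> set ts \<longleftrightarrow> tb \<in> set ts"
    if "p \<in> P" "ta \<in> T" "p \<in> post ta" "tb \<in> T" "p \<in> pre tb" for p ta tb
  proof -
    have "M0 p = 0" using that unfolding M0_def only_source_marking_def pre_place_def by auto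
    moreover have "Md p = 0" using that unfolding Md_def only_sink_marking_def post_place_def by auto
    moreover note ts(2)[rule_format, of p]
    ultimately have "cnt post p ts = cnt pre p ts" by simp
    then have "length (filter (\<lambda>t. t = ta) ts) = length (filter (\<lambda>t. t = tb) ts)"
      using cnt_single[OF ts(1) Aeq[OF that(1-3)]] cnt_single[OF ts(1) Beq[OF that(1) that(4-5)]]
      by simp
    then show ?thesis by (metis occ_pos)
  qed
  define Q where "Q x = (case x of Inr t \<Rightarrow> t \<in> set ts
      | Inl p \<Rightarrow> (\<forall>t\<in>T. p \<in> pre t \<or> p \<in> post t \<longrightarrow> t \<in> set ts))" for x
  have arcQ: "Q a = Q b" if "(a, b) \<in> arcs T pre post" for a b
  proof -
    from that consider (i) p t where "a = Inl p" "b = Inr t" "t \<in> T" "p \<in> pre t"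
      | (o) p t where "a = Inr t" "b = Inl p" "t \<in> T" "p \<in> post t"
      unfolding arcs_def by blast
    then show ?thesis
    proof cases
      case (i p t)
      then have pP: "p \<in> P" using sub by auto
      have "Q b \<Longrightarrow> Q a"
        unfolding i Q_def using uB[OF pP _ i(3) _ i(4)] key[OF pP _ _ i(3) i(4)] by auto
      moreover have "Q a \<Longrightarrow> Q b" unfolding i Q_def using i by auto
      ultimately show ?thesis by blast
    next
      case (o p t)
      then have pP: "p \<in> P" using sub by auto
      have "Q a \<Longrightarrow> Q b"
        unfolding o Q_def using uA[OF pP _ o(3) _ o(4)] key[OF pP o(3) o(4)] by auto
      moreover have "Q b \<Longrightarrow> Q a" unfolding o Q_def using o by auto
      ultimately show ?thesis by blast
    qed
  qed
  have propag: "Q b" if "(a, b) \<in> (arcs T pre post \<union> (arcs T pre post)\<inverse>)\<^sup>*" "Q a" for a b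
    using that
  proof (induction rule: rtrancl_induct)
    case base then show ?case .
  next
    case (step y z) then show ?case using arcQ by blast
  qed
  have allT: "t \<in> set ts" if "t \<in> T" for t
  proof -
    obtain t0 where t0: "t0 \<in> T" "t0 \<in> set ts"
    proof -
      from assms(5) show thesis
      proof
        assume "\<exists>p. proper_source P T pre post p"
        then obtain p tb where p: "p \<in> P" "{t\<in>T. p \<in> post t} = {}" "tb \<in> T" "p \<in> pre tb"
          unfolding proper_source_def pre_place_def post_place_def by blast
        have "M0 p = 1" using p unfolding M0_def only_source_marking_def pre_place_def by auto
        moreover have "Md p = 0" using p unfolding Md_def only_sink_marking_def post_place_def by auto
        moreover note ts(2)[rule_format, of p]
        ultimately have "length (filter (\<lambda>t. t = tb) ts) = 1"
          using cnt_empty[OF ts(1) p(2)] cnt_single[OF ts(1) Beq[OF p(1) p(3-4)]] by simp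
        then show thesis using that p(3) occ_pos[of tb ts] by simp
      next
        assume "\<exists>p. proper_sink P T pre post p"
        then obtain p ta where p: "p \<in> P" "{t\<in>T. p \<in> pre t} = {}" "ta \<in> T" "p \<in> post ta"
          unfolding proper_sink_def pre_place_def post_place_def by blast
        have "M0 p = 0" using p unfolding M0_def only_source_marking_def pre_place_def by auto
        moreover have "Md p = 1" using p unfolding Md_def only_sink_marking_def post_place_def by auto
        moreover note ts(2)[rule_format, of p]
        ultimately have "length (filter (\<lambda>t. t = ta) ts) = 1"
          using cnt_empty[OF ts(1) p(2)] cnt_single[OF ts(1) Aeq[OF p(1) p(3-4)]] by simp
        then show thesis using that p(3) occ_pos[of ta ts] by simp
      qed
    qed
    have "(Inr t0, Inr t) \<in> (arcs T pre post \<union> (arcs T pre post)\<inverse>)\<^sup>*"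
      using assms(2) t0(1) that unfolding weakly_connected_def nodes_def by blast
    from propag[OF this] show ?thesis using t0 unfolding Q_def by simp
  qed
  define ord where "ord t = (LEAST i. i < length ts \<and> ts ! i = t)" for t
  have ord1: "ord t < length ts \<and> ts ! ord t = t" if "t \<in> T" for t
  proof -
    have "\<exists>i. i < length ts \<and> ts ! i = t" using allT[OF that] by (simp add: in_set_conv_nth)
    then show ?thesis unfolding ord_def by (rule LeastI_ex)
  qed
  have ord2: "ord t \<le> j" if "j < length ts" "ts ! j = t" for t j
    unfolding ord_def using that by (simp add: Least_le)
  have ordlt: "ord t < ord t'" if "t \<in> T" "t' \<in> T" "p \<in> post t" "p \<in> pre t'" for t t' p
  proof -
    have pP: "p \<in> P" using sub that by auto
    define i where "i = ord t'"
    have i: "i < length ts" "ts ! i = t'" using ord1[OF that(2)] unfolding i_def by auto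
    have "int (M0 p) + cnt post p (take i ts) - cnt pre p (take i ts) \<ge> 1"
      using ts(3) i that(4) by auto
    moreover have "M0 p = 0" using that pP unfolding M0_def only_source_marking_def pre_place_def by auto
    moreover have "cnt pre p (take i ts) \<ge> 0" by (simp add: cnt_def)
    ultimately have "cnt post p (take i ts) \<ge> 1" by simp
    then have "filter (\<lambda>t. p \<in> post t) (take i ts) \<noteq> []" by (auto simp: cnt_def)
    then obtain x where x: "x \<in> set (take i ts)" "p \<in> post x" by (auto simp: filter_empty_conv)
    have "x \<in> T" using x(1) ts(1) set_take_subset by fast
    then have "x = t" using uA[OF pP _ that(1) x(2) that(3)] by simp
    then obtain j where "j < i" "ts ! j = t" using x(1) i(1)
      by (auto simp: in_set_conv_nth)
    then show ?thesis using ord2[of j t] i(1) unfolding i_def by simp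
  qed
  define f where "f x = (case x of Inr t \<Rightarrow> 2 * ord t + 2
     | Inl p \<Rightarrow> (if \<exists>t\<in>T. p \<in> post t then 2 * ord (SOME t. t \<in> T \<and> p \<in> post t) + 3 else 0))"
    for x :: "'p + 't"
  have "arcs T pre post \<subseteq> inv_image less_than f"
  proof
    fix e assume "e \<in> arcs T pre post"
    then consider (i) p t where "e = (Inl p, Inr t)" "t \<in> T" "p \<in> pre t"
      | (o) p t where "e = (Inr t, Inl p)" "t \<in> T" "p \<in> post t"
      unfolding arcs_def by blast
    then show "e \<in> inv_image less_than f"
    proof cases
      case (i p t)
      then have pP: "p \<in> P" using sub by auto
      show ?thesis
      proof (cases "\<exists>t\<in>T. p \<in> post t")
        case True
        then have s: "(SOME t. t \<in> T \<and> p \<in> post t) \<in> T \<and> p \<in> post (SOME t. t \<in> T \<and> p \<in> post t)"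
          by (metis (mono_tags, lifting) someI_ex)
        have "ord (SOME t. t \<in> T \<and> p \<in> post t) < ord t" using ordlt s i by blast
        then show ?thesis using True unfolding i f_def by simp
      next
        case False then show ?thesis unfolding i f_def by simp
      qed
    next
      case (o p t)
      then have pP: "p \<in> P" using sub by auto
      have s: "(SOME t. t \<in> T \<and> p \<in> post t) \<in> T \<and> p \<in> post (SOME t. t \<in> T \<and> p \<in> post t)"
        using o by (metis (mono_tags, lifting) someI_ex)
      then have "(SOME t. t \<in> T \<and> p \<in> post t) = t" using uA[OF pP _ o(2) _ o(3)] by blast
      then show ?thesis using o unfolding f_def by auto
    qed
  qed
  then show ?thesis unfolding net_acyclic_def
    by (meson acyclic_subset wf_acyclic wf_inv_image wf_less_than)
qed

end
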